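(* Let $n,r\ge1$, $\lambda\in\Lambda_\vartriangle(n,r)$ and $d\in\mathscr D^\vartriangle_\lambda$. Let $$Y=\{(s,t)\in\mathbb Z^2\mid 1\le d^{-1}(s)\le r,\ s<t,\ s,t\in R^\lambda_k\text{ for some }k\in\mathbb Z\},$$ $$Z=\{(s,t)\in\mathbb Z^2\mid 1\le s\le r,\ s<t,\ s,t\in R^\lambda_k\text{ for some }1\le k\le n\}.$$ Then $|Y|=|Z|=\ell(w_{0,\lambda})$, where $w_{0,\lambda}$ is the longest element of $\mathfrak S_\lambda$.
   Context: The affine symmetric group $\mathfrak S_{\vartriangle,r}$ is the group (under composition) of bijections $w:\mathbb Z\to\mathbb Z$ with $w(i+r)=w(i)+r$. It contains $s_i$ ($1\le i\le r$): $s_i(j)=j$ if $j\not\equiv i,i+1\pmod r$, $s_i(j)=j-1$ if $j\equiv i+1$, $s_i(j)=j+1$ if $j\equiv i$; and $\rho:j\mapsto j+1$. The $s_i$ generate a Coxeter group $W$ with length $\ell$; every element is uniquely $\rho^aw'$ ($w'\in W$) and $\ell(\rho^aw')=\ell(w')$. $\Lambda_\vartriangle(n,r)$ is the set of $\lambda=(\lambda_i)_{i\in\mathbb Z}$ with $\lambda_i\in\mathbb N$, $\lambda_{i+n}=\lambda_i$, $\lambda_1+\dots+\lambda_n=r$. For $1\le i\le n$, $k\in\mathbb Z$ put $\lambda_{k,i-1}=kr+\sum_{t=1}^{i-1}\lambda_t$ and $R^\lambda_{i+kn}=\{\lambda_{k,i-1}+1,\dots,\lambda_{k,i-1}+\lambda_i\}$.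 $\mathfrak S_\lambda$ is the Young subgroup $\mathfrak S_{(\lambda_1,\dots,\lambda_n)}$ of $\mathfrak S_r$ (periodically extended), and $\mathscr D^\vartriangle_\lambda=\{d\mid \ell(wd)=\ell(w)+\ell(d)\ \forall w\in\mathfrak S_\lambda\}$. *)

theory Defs
  imports Main
begin

definition aff_sym :: "nat \<Rightarrow> (int \<Rightarrow> int) set" where
  "aff_sym r = {w. bij w \<and> (\<forall>i. w (i + int r) = w i + int r)}"

definition sref :: "nat \<Rightarrow> nat \<Rightarrow> int \<Rightarrow> int" where
  "sref r i j = (if j mod int r = (int i + 1) mod int r then j - 1
                 else if j mod int r = int i mod int r then j + 1 else j)"

definition rho_pow :: "int \<Rightarrow> int \<Rightarrow> int" where
  "rho_pow a = (\<lambda>j. j + a)"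

text \<open>Length: every element is rho^a w' with w' in the Coxeter group W generated by
  the s_i, and the length is the Coxeter length of w' (least number of generators).\<close>
definition aff_len :: "nat \<Rightarrow> (int \<Rightarrow> int) \<Rightarrow> nat" where
  "aff_len r w = (LEAST k. \<exists>a is. length is = k \<and> set is \<subseteq> {1..r} \<and>
        w = rho_pow a \<circ> foldr (\<circ>) (map (sref r) is) id)"

definition lam_off :: "(int \<Rightarrow> nat) \<Rightarrow> nat \<Rightarrow> int \<Rightarrow> int \<Rightarrow> int" where
  "lam_off lam r k i = k * int r + (\<Sum>t\<in>{1..i-1}. int (lam t))"

definition Rblock :: "(int \<Rightarrow> nat) \<Rightarrow> nat \<Rightarrow> nat \<Rightarrow> int \<Rightarrow> int set" where
  "Rblock lam n r m =
     (let i = (m - 1) mod int n + 1; k = (m - 1) div int n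
      in {lam_off lam r k i + 1 .. lam_off lam r k i + int (lam i)})"

definition Lam_aff :: "nat \<Rightarrow> nat \<Rightarrow> (int \<Rightarrow> nat) set" where
  "Lam_aff n r = {lam. (\<forall>i. lam (i + int n) = lam i) \<and> (\<Sum>i\<in>{1..int n}. lam i) = r}"

text \<open>Young subgroup S_lambda of S_r, periodically extended: the elements of the
  affine symmetric group stabilising every block R^lambda_k (1 <= k <= n).\<close>
definition young_sub :: "(int \<Rightarrow> nat) \<Rightarrow> nat \<Rightarrow> nat \<Rightarrow> (int \<Rightarrow> int) set" where
  "young_sub lam n r = {w \<in> aff_sym r. \<forall>k\<in>{1..int n}. w ` Rblock lam n r k = Rblock lam n r k}"

definition dist_reps :: "(int \<Rightarrow> nat) \<Rightarrow> nat \<Rightarrow> nat \<Rightarrow> (int \<Rightarrow> int) set" where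
  "dist_reps lam n r = {d \<in> aff_sym r. \<forall>w \<in> young_sub lam n r.
        aff_len r (w \<circ> d) = aff_len r w + aff_len r d}"

definition longest_young :: "(int \<Rightarrow> nat) \<Rightarrow> nat \<Rightarrow> nat \<Rightarrow> int \<Rightarrow> int" where
  "longest_young lam n r = (SOME w. w \<in> young_sub lam n r \<and>
        (\<forall>v \<in> young_sub lam n r. aff_len r v \<le> aff_len r w))"

end

theory Submission
  imports Defs
begin


definition Ssum :: "(int \<Rightarrow> nat) \<Rightarrow> int \<Rightarrow> int" where
  "Ssum lam j = (\<Sum>t\<in>{1..j}. int (lam t))"

lemma Ssum_step: "1 \<le> k \<Longrightarrow> Ssum lam k = Ssum lam (k-1) + int (lam k)"
proof -
  assume "1 \<le> k"
  then have "{1..k} = insert k {1..k-1}" by auto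
  then show ?thesis unfolding Ssum_def by simp
qed

lemma Ssum_mono: "j \<le> j' \<Longrightarrow> Ssum lam j \<le> Ssum lam j'"
  unfolding Ssum_def by (rule sum_mono2) auto

lemma Ssum_0[simp]: "Ssum lam 0 = 0" unfolding Ssum_def by simp

locale blk =
  fixes n r :: nat and lam :: "int \<Rightarrow> nat"
  assumes n1: "n \<ge> 1" and r1: "r \<ge> 1" and lamA: "lam \<in> Lam_aff n r"
begin

abbreviation "Rb \<equiv> Rblock lam n r"
abbreviation "S \<equiv> Ssum lam"

lemma S_n: "S (int n) = int r"
proof -
  have "(\<Sum>i\<in>{1..int n}. lam i) = r" using lamA unfolding Lam_aff_def by auto
  then show ?thesis unfolding Ssum_def by (metis of_nat_sum)
qed

lemma Rb_std: assumes "k \<in> {1..int n}" shows "Rb k = {S (k-1) + 1 .. S k}"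
proof -
  have m: "(k - 1) mod int n = k - 1" and d: "(k-1) div int n = 0" using assms by auto
  show ?thesis unfolding Rblock_def Let_def lam_off_def m d Ssum_def[symmetric]
    using Ssum_step[of k lam] assms by simp
qed

lemma Rb_sub: assumes "k \<in> {1..int n}" shows "Rb k \<subseteq> {1..int r}"
proof -
  have "0 \<le> S (k-1)" using Ssum_mono[of 0 "k-1" lam] assms by simp
  moreover have "S k \<le> int r" using Ssum_mono[of k "int n" lam] assms S_n by simp
  ultimately show ?thesis using Rb_std[OF assms] by auto
qed

lemma Rb_order: assumes "k \<in> {1..int n}" "k' \<in> {1..int n}" "k < k'" "p \<in> Rb k" "q \<in> Rb k'"
  shows "p < q"
proof -
  have "S k \<le> S (k'-1)" using Ssum_mono[of k "k'-1" lam] assms by simp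
  then show ?thesis using assms Rb_std by auto
qed

lemma Rb_uniq: assumes "k \<in> {1..int n}" "k' \<in> {1..int n}" "p \<in> Rb k" "p \<in> Rb k'"
  shows "k = k'"
  using Rb_order[OF assms(1,2) _ assms(3,4)] Rb_order[OF assms(2,1) _ assms(4,3)]
  by (metis less_irrefl linorder_neqE)

lemma Rb_cover: assumes "p \<in> {1..int r}" shows "\<exists>k\<in>{1..int n}. p \<in> Rb k"
proof -
  define k where "k = (LEAST k::nat. p \<le> S (int k))"
  have ex: "p \<le> S (int n)" using assms S_n by simp
  then have pk: "p \<le> S (int k)" unfolding k_def by (rule LeastI)
  have kn: "k \<le> n" unfolding k_def using ex by (rule Least_le)
  have k0: "k \<noteq> 0" proof
    assume "k = 0" then show False using pk assms by simp
  qed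
  then have "\<not> p \<le> S (int (k - 1))" unfolding k_def
    by (metis diff_less k_def not_less_Least zero_less_iff_neq_zero zero_less_one)
  then have "S (int k - 1) < p" using k0 by (simp add: of_nat_diff)
  then have "p \<in> Rb (int k)" using Rb_std[of "int k"] k0 kn pk by auto
  then show ?thesis using k0 kn by force
qed

lemma Rb_shift: "x + int r \<in> Rb (m + int n) \<longleftrightarrow> x \<in> Rb m"
proof -
  have a: "(m + int n - 1) mod int n = (m - 1) mod int n"
    by (metis add_diff_eq diff_add_eq mod_add_self2)
  have e: "m + int n - 1 = (m-1) + int n" by simp
  have b: "(m + int n - 1) div int n = (m - 1) div int n + 1" unfolding e using n1
    by (simp add: div_add_self2)
  show ?thesis unfolding Rblock_def Let_def a b lam_off_def by (auto simp: algebra_simps)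
qed

end


lemma per_nat: assumes "\<forall>i. u (i + int r) = u i + int r"
  shows "u (i + int c * int r) = u i + int c * int r"
proof (induction c arbitrary: i)
  case 0 then show ?case by simp
next
  case (Suc c)
  have "u (i + int (Suc c) * int r) = u ((i + int c * int r) + int r)" by (simp add: algebra_simps)
  also have "\<dots> = u (i + int c * int r) + int r" using assms by blast
  finally show ?case using Suc by (simp add: algebra_simps)
qed

lemma per_int: assumes "\<forall>i. u (i + int r) = u i + int r"
  shows "u (i + c * int r) = u i + c * int r"
proof (cases "c \<ge> 0")
  case True
  then show ?thesis using per_nat[OF assms, of i "nat c"] by simp
next
  case False
  have "u ((i + c * int r) + int (nat (-c)) * int r) = u (i + c * int r) + int (nat (-c)) * int r"
    by (rule per_nat[OF assms])
  then show ?thesis using False by (simp add: algebra_simps)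
qed

lemma cr_bound: "(c::int) \<ge> 1 \<or> c \<le> -1 \<Longrightarrow> c * int r \<ge> int r \<or> c * int r \<le> - int r"
proof -
  assume "c \<ge> 1 \<or> c \<le> -1"
  then show ?thesis
  proof
    assume "c \<ge> 1" then have "1 * int r \<le> c * int r" by (intro mult_right_mono) auto
    then show ?thesis by simp
  next
    assume "c \<le> -1" then have "c * int r \<le> (-1) * int r" by (intro mult_right_mono) auto
    then show ?thesis by simp
  qed
qed

lemma modr_inj: assumes per: "\<forall>i. u (i + int r) = u i + int r" and inj: "inj u"
  and p: "p \<in> {1..int r}" and q: "q \<in> {1..int r}" and m: "u p mod int r = u q mod int r"
  shows "p = q"
proof -
  have "int r dvd (u p - u q)" using m by (simp add: mod_eq_dvd_iff)
  then obtain c where c: "u p - u q = int r * c" by (auto elim: dvdE)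
  have "u p = u (q + c * int r)" using per_int[OF per, of q c] c by (simp add: algebra_simps)
  then have "p = q + c * int r" using inj by (auto dest: injD)
  moreover have "c = 0"
  proof (rule ccontr)
    assume "c \<noteq> 0"
    then have "c \<ge> 1 \<or> c \<le> -1" by auto
    then have "c * int r \<ge> int r \<or> c * int r \<le> - int r"
      using cr_bound by blast
    then show False using p q \<open>p = q + c * int r\<close> by (cases "c * int r \<ge> int r") auto
  qed
  ultimately show ?thesis by simp
qed

context blk begin

lemma Rb_gen: "Rb m = {((m-1) div int n) * int r + S ((m-1) mod int n) + 1 ..
                       ((m-1) div int n) * int r + S ((m-1) mod int n + 1)}"
proof -
  have "(m-1) mod int n + 1 \<ge> 1" using n1 by simp
  then show ?thesis unfolding Rblock_def Let_def lam_off_def Ssum_def[symmetric]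
    using Ssum_step[of "(m-1) mod int n + 1" lam] by simp
qed

lemma S_bounds: assumes "0 \<le> j" "j \<le> int n" shows "0 \<le> S j" "S j \<le> int r"
  using Ssum_mono[of 0 j lam] Ssum_mono[of j "int n" lam] assms S_n by auto

lemma Rb_gen_bounds: assumes "x \<in> Rb m"
  shows "((m-1) div int n) * int r + 1 \<le> x" "x \<le> ((m-1) div int n) * int r + int r"
    and "x \<le> ((m-1) div int n) * int r + S ((m-1) mod int n + 1)"
    and "((m-1) div int n) * int r + S ((m-1) mod int n) + 1 \<le> x"
proof -
  have a: "0 \<le> (m-1) mod int n" "(m-1) mod int n < int n" using n1 by auto
  note sb1 = S_bounds[of "(m-1) mod int n"] and sb2 = S_bounds[of "(m-1) mod int n + 1"]
  show "((m-1) div int n) * int r + 1 \<le> x" "x \<le> ((m-1) div int n) * int r + int r"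
    "x \<le> ((m-1) div int n) * int r + S ((m-1) mod int n + 1)"
    "((m-1) div int n) * int r + S ((m-1) mod int n) + 1 \<le> x"
    using assms Rb_gen[of m] a sb1 sb2 by auto
qed

lemma Rb_width: assumes "s \<in> Rb m" "t \<in> Rb m" shows "t - s < int r"
proof -
  have g0: "0 \<le> (m-1) mod int n" and lt: "(m-1) mod int n < int n" using n1 by simp_all
  have A: "0 \<le> S ((m-1) mod int n)" using S_bounds(1)[OF g0] lt by linarith
  have B: "S ((m-1) mod int n + 1) \<le> int r" using S_bounds(2)[of "(m-1) mod int n + 1"] g0 lt by linarith
  show ?thesis using A B Rb_gen_bounds(3)[OF assms(2)] Rb_gen_bounds(4)[OF assms(1)] by linarith
qed

lemma Rb_base: assumes "s \<in> {1..int r}" "s \<in> Rb m" shows "m \<in> {1..int n}"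
proof -
  let ?c = "(m-1) div int n"
  have "?c = 0"
  proof (rule ccontr)
    assume "?c \<noteq> 0"
    then have "?c \<ge> 1 \<or> ?c \<le> -1" by auto
    then have "?c * int r \<ge> int r \<or> ?c * int r \<le> - int r"
      using cr_bound by blast
    then show False using Rb_gen_bounds(1,2)[OF assms(2)] assms(1) by (cases "?c * int r \<ge> int r") auto
  qed
  moreover have "m - 1 = int n * ((m-1) div int n) + (m-1) mod int n" by simp
  moreover have "0 \<le> (m-1) mod int n" "(m-1) mod int n < int n" using n1 by simp_all
  ultimately have "0 \<le> m - 1" "m - 1 < int n" by simp_all
  then show ?thesis by auto
qed

definition T :: "int \<Rightarrow> int set" where
  "T s = {t. s < t \<and> (\<exists>k. s \<in> Rb k \<and> t \<in> Rb k)}"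

lemma T_fin: "finite (T s)"
proof -
  have "T s \<subseteq> {s+1..s+int r}"
  proof
    fix t assume "t \<in> T s"
    then obtain k where "s < t" "s \<in> Rb k" "t \<in> Rb k" unfolding T_def by blast
    then show "t \<in> {s+1..s+int r}" using Rb_width[of s k t] by simp
  qed
  then show ?thesis using finite_subset by blast
qed

lemma T_shift: "T (s + int r) = (\<lambda>t. t + int r) ` T s"
proof
  show "T (s + int r) \<subseteq> (\<lambda>t. t + int r) ` T s"
  proof
    fix t assume "t \<in> T (s + int r)"
    then obtain k where k: "s + int r < t" "s + int r \<in> Rb k" "t \<in> Rb k" unfolding T_def by auto
    have k': "k = (k - int n) + int n" by simp
    have "s \<in> Rb (k - int n)" using k(2) Rb_shift[of s "k - int n"] k' by simp
    moreover have "t - int r \<in> Rb (k - int n)" using k(3) Rb_shift[of "t - int r" "k - int n"] k' by simp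
    ultimately have "t - int r \<in> T s" using k(1) unfolding T_def by auto
    then show "t \<in> (\<lambda>t. t + int r) ` T s" by force
  qed
next
  show "(\<lambda>t. t + int r) ` T s \<subseteq> T (s + int r)"
  proof
    fix x assume "x \<in> (\<lambda>t. t + int r) ` T s"
    then obtain t where x: "x = t + int r" and "t \<in> T s" by blast
    then obtain k where "s < t" "s \<in> Rb k" "t \<in> Rb k" unfolding T_def by blast
    then have "s + int r \<in> Rb (k + int n)" "t + int r \<in> Rb (k + int n)" using Rb_shift by auto
    then show "x \<in> T (s + int r)" unfolding T_def x using \<open>s < t\<close> by auto
  qed
qed

lemma card_T_shift1: "card (T (s + int r)) = card (T s)"
  unfolding T_shift by (rule card_image) (simp add: inj_on_def)

lemma card_T_nat: "card (T (s + int c * int r)) = card (T s)"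
proof (induction c arbitrary: s)
  case 0 then show ?case by simp
next
  case (Suc c)
  have "card (T (s + int (Suc c) * int r)) = card (T ((s + int c * int r) + int r))"
    by (simp add: algebra_simps)
  also have "\<dots> = card (T s)" using card_T_shift1 Suc by simp
  finally show ?case .
qed

lemma card_T_int: "card (T (s + c * int r)) = card (T s)"
proof (cases "c \<ge> 0")
  case True then show ?thesis using card_T_nat[of s "nat c"] by simp
next
  case False
  have "card (T ((s + c * int r) + int (nat (-c)) * int r)) = card (T (s + c * int r))"
    by (rule card_T_nat)
  then show ?thesis using False by (simp add: algebra_simps)
qed

end


definition Inv :: "nat \<Rightarrow> (int \<Rightarrow> int) \<Rightarrow> (int \<times> int) set" where
  "Inv r w = {(a,b). 1 \<le> a \<and> a < b \<and> b \<le> int r \<and> w b < w a}"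

definition pinj :: "nat \<Rightarrow> (int \<Rightarrow> int) \<Rightarrow> bool" where
  "pinj r u \<longleftrightarrow> (\<forall>i. u (i + int r) = u i + int r) \<and> inj u"

lemma Inv_sub: "Inv r w \<subseteq> {1..int r} \<times> {1..int r}"
  unfolding Inv_def by auto

lemma Inv_fin: "finite (Inv r w)"
  using Inv_sub finite_subset by blast

lemma sref_per: "sref r x (y + int r) = sref r x y + int r"
  unfolding sref_def by simp

lemma sref_cases: "(sref r x y = y - 1 \<and> y mod int r = (int x + 1) mod int r) \<or>
   (sref r x y = y + 1 \<and> y mod int r = int x mod int r) \<or> sref r x y = y"
  unfolding sref_def by auto

lemma dvd_two: "(r::int) \<ge> 2 \<Longrightarrow> r dvd a \<Longrightarrow> r dvd (a + 1) \<Longrightarrow> False"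
proof -
  assume "r \<ge> 2" "r dvd a" "r dvd (a+1)"
  then have "r dvd 1" by (metis add_diff_cancel_left' dvd_diff)
  then show False using \<open>r \<ge> 2\<close> using zdvd_imp_le[of r 1] by simp
qed


lemma sref_inv: assumes "r \<ge> 2" shows "sref r x (sref r x y) = y"
proof -
  have rr: "int r \<ge> 2" using assms by simp
  have ne: "\<not> (int r dvd (y - int x) \<and> int r dvd (y - int x - 1))"
    using dvd_two[OF rr, of "y - int x - 1"] by auto
  show ?thesis using ne unfolding sref_def
    by (auto simp: mod_eq_dvd_iff algebra_simps)
qed

lemma sref_inj: assumes "r \<ge> 1" shows "inj (sref r x)"
proof (cases "r = 1")
  case True
  then have "sref r x = (\<lambda>y. y - 1)" unfolding sref_def by (auto simp: fun_eq_iff)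
  then show ?thesis by (simp add: inj_on_def)
next
  case False
  then have "r \<ge> 2" using assms by simp
  then show ?thesis by (metis injI sref_inv)
qed

lemma pinj_comp: "pinj r u \<Longrightarrow> pinj r v \<Longrightarrow> pinj r (u \<circ> v)"
  unfolding pinj_def by (simp add: inj_compose)

lemma pinj_sref: "r \<ge> 1 \<Longrightarrow> pinj r (sref r x)"
  unfolding pinj_def using sref_per sref_inj by blast

lemma pinj_id: "pinj r id" unfolding pinj_def by simp

lemma Inv_rho: "Inv r (rho_pow a \<circ> u) = Inv r u"
  unfolding Inv_def rho_pow_def by simp

lemma Inv_id: "Inv r id = {}" unfolding Inv_def by auto

lemma new_inv: assumes inj: "inj u" and "(p,q) \<in> Inv r (sref r x \<circ> u)" "(p,q) \<notin> Inv r u"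
  shows "u p mod int r = int x mod int r \<and> u q mod int r = (int x + 1) mod int r"
proof -
  have pq: "1 \<le> p" "p < q" "q \<le> int r" "sref r x (u q) < sref r x (u p)" "\<not> u q < u p"
    using assms unfolding Inv_def by auto
  have "u p \<noteq> u q" using inj pq(2) by (auto dest: injD)
  then show ?thesis using pq(4,5) sref_cases[of r x "u p"] sref_cases[of r x "u q"] by auto
qed

lemma Inv_left: assumes r: "r \<ge> 1" and u: "pinj r u"
  shows "card (Inv r (sref r x \<circ> u)) \<le> card (Inv r u) + 1"
proof -
  define D where "D = Inv r (sref r x \<circ> u) - Inv r u"
  have per: "\<forall>i. u (i + int r) = u i + int r" and inj: "inj u" using u unfolding pinj_def by auto
  have "card D \<le> Suc 0"
  proof (subst card_le_Suc0_iff_eq)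
    show "finite D" unfolding D_def using Inv_fin by blast
    show "\<forall>a1\<in>D. \<forall>a2\<in>D. a1 = a2"
    proof (intro ballI)
      fix a1 a2 assume a1: "a1 \<in> D" and a2: "a2 \<in> D"
      obtain p q where 1: "a1 = (p,q)" by fastforce
      obtain p' q' where 2: "a2 = (p',q')" by fastforce
      have i1: "(p,q) \<in> Inv r (sref r x \<circ> u)" "(p,q) \<notin> Inv r u" using a1 1 D_def by auto
      have i2: "(p',q') \<in> Inv r (sref r x \<circ> u)" "(p',q') \<notin> Inv r u" using a2 2 D_def by auto
      have m1: "u p mod int r = u p' mod int r" "u q mod int r = u q' mod int r"
        using new_inv[OF inj i1] new_inv[OF inj i2] by auto
      have b: "p \<in> {1..int r}" "q \<in> {1..int r}" "p' \<in> {1..int r}" "q' \<in> {1..int r}"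
        using i1(1) i2(1) unfolding Inv_def by auto
      have "p = p'" by (rule modr_inj[OF per inj b(1) b(3) m1(1)])
      moreover have "q = q'" by (rule modr_inj[OF per inj b(2) b(4) m1(2)])
      ultimately show "a1 = a2" using 1 2 by simp
    qed
  qed
  have "Inv r (sref r x \<circ> u) \<subseteq> Inv r u \<union> D" unfolding D_def by auto
  then have "card (Inv r (sref r x \<circ> u)) \<le> card (Inv r u \<union> D)"
    by (intro card_mono) (use Inv_fin D_def in auto)
  also have "\<dots> \<le> card (Inv r u) + card D" by (rule card_Un_le)
  finally show ?thesis using \<open>card D \<le> Suc 0\<close> by simp
qed

lemma word_bound: assumes "r \<ge> 1"
  shows "pinj r (foldr (\<circ>) (map (sref r) is) id) \<and>
         card (Inv r (foldr (\<circ>) (map (sref r) is) id)) \<le> length is"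
proof (induction "is")
  case Nil
  have "pinj r (\<lambda>a. a)" "Inv r (\<lambda>a. a) = {}" using pinj_id Inv_id unfolding id_def by auto
  then show ?case by simp
next
  case (Cons x xs)
  let ?u = "foldr (\<circ>) (map (sref r) xs) id"
  have ih1: "pinj r ?u" and ih2: "card (Inv r ?u) \<le> length xs" using Cons.IH by blast+
  have "pinj r (sref r x \<circ> ?u)" using ih1 pinj_comp pinj_sref assms by blast
  moreover have "card (Inv r (sref r x \<circ> ?u)) \<le> length xs + 1"
    using Inv_left[OF assms ih1, of x] ih2 by linarith
  moreover have eq: "foldr (\<circ>) (map (sref r) (x#xs)) id = sref r x \<circ> ?u" by simp
  ultimately show ?case unfolding eq length_Cons by (simp only: Suc_eq_plus1)
qed

lemma aff_len_lower:
  assumes r: "r \<ge> 1" and ex: "\<exists>a is. length is = k \<and> set is \<subseteq> {1..r} \<and>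
        w = rho_pow a \<circ> foldr (\<circ>) (map (sref r) is) id"
  shows "card (Inv r w) \<le> aff_len r w"
proof -
  let ?P = "\<lambda>k. \<exists>a is. length is = k \<and> set is \<subseteq> {1..r} \<and>
        w = rho_pow a \<circ> foldr (\<circ>) (map (sref r) is) id"
  have "?P (aff_len r w)" unfolding aff_len_def by (rule LeastI[of ?P k]) (rule ex)
  then obtain a "is" where "length is = aff_len r w" "w = rho_pow a \<circ> foldr (\<circ>) (map (sref r) is) id"
    by blast
  then show ?thesis using word_bound[OF r, of "is"] Inv_rho by simp
qed

lemma aff_len_upper:
  assumes "length is = k" "set is \<subseteq> {1..r}" "w = rho_pow a \<circ> foldr (\<circ>) (map (sref r) is) id"
  shows "aff_len r w \<le> k"
  unfolding aff_len_def by (rule Least_le) (use assms in blast)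



lemma foldr_comp_gen: "foldr (\<circ>) fs g = foldr (\<circ>) fs id \<circ> g"
  by (induction fs) (auto simp: fun_eq_iff)

lemma foldr_snoc: "foldr (\<circ>) (map s (xs @ [y])) id = foldr (\<circ>) (map s xs) id \<circ> s y"
  using foldr_comp_gen[of "map s xs" "s y"] by simp

lemma rho0: "rho_pow 0 = id" unfolding rho_pow_def by (simp add: fun_eq_iff)

lemma range_modeq: assumes "y \<in> {1..int r}" "z \<in> {1..int r}" "y mod int r = z mod int r"
  shows "y = z"
  by (rule modr_inj[of id r]) (use assms in auto)

context blk begin

definition Zs :: "(int \<times> int) set" where
  "Zs = {(s, t). 1 \<le> s \<and> s \<le> int r \<and> s < t \<and> (\<exists>k\<in>{1..int n}. s \<in> Rb k \<and> t \<in> Rb k)}"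

lemma Zs_fin: "finite Zs"
proof -
  have "Zs \<subseteq> {1..int r} \<times> {1..int r}" unfolding Zs_def using Rb_sub by blast
  then show ?thesis using finite_subset by blast
qed

lemma young_maps: assumes "w \<in> young_sub lam n r" "k \<in> {1..int n}" "p \<in> Rb k"
  shows "w p \<in> Rb k"
  using assms unfolding young_sub_def by blast

lemma young_range: assumes "w \<in> young_sub lam n r" "p \<in> {1..int r}" shows "w p \<in> {1..int r}"
  using Rb_cover[OF assms(2)] young_maps[OF assms(1)] Rb_sub by blast

lemma Inv_young: assumes "w \<in> young_sub lam n r" "(a,b) \<in> Inv r w"
  shows "\<exists>k\<in>{1..int n}. a \<in> Rb k \<and> b \<in> Rb k"
proof -
  have ab: "1 \<le> a" "a < b" "b \<le> int r" "w b < w a" using assms(2) unfolding Inv_def by auto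
  obtain k where k: "k \<in> {1..int n}" "a \<in> Rb k" using Rb_cover[of a] ab by auto
  obtain k' where k': "k' \<in> {1..int n}" "b \<in> Rb k'" using Rb_cover[of b] ab by auto
  have wa: "w a \<in> Rb k" and wb: "w b \<in> Rb k'" using young_maps[OF assms(1)] k k' by auto
  have "\<not> k < k'" using Rb_order[OF k(1) k'(1) _ wa wb] ab by auto
  moreover have "\<not> k' < k" using Rb_order[OF k'(1) k(1) _ k'(2) k(2)] ab by auto
  ultimately have "k = k'" by simp
  then show ?thesis using k k' by auto
qed

lemma Inv_young_Zs: assumes "w \<in> young_sub lam n r" shows "Inv r w \<subseteq> Zs"
proof
  fix x assume x: "x \<in> Inv r w"
  obtain a b where ab: "x = (a,b)" by fastforce
  show "x \<in> Zs" using Inv_young[OF assms x[unfolded ab]] x ab unfolding Inv_def Zs_def by auto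
qed

definition blkof :: "int \<Rightarrow> int" where
  "blkof p = (THE k. k \<in> {1..int n} \<and> p \<in> Rb k)"

lemma blkof_eq: "k \<in> {1..int n} \<Longrightarrow> p \<in> Rb k \<Longrightarrow> blkof p = k"
  unfolding blkof_def by (rule the_equality) (auto intro: Rb_uniq)

definition g :: "int \<Rightarrow> int" where
  "g p = S (blkof p - 1) + S (blkof p) + 1 - p"

lemma g_blk: assumes "k \<in> {1..int n}" "p \<in> Rb k"
  shows "g p \<in> Rb k" "g (g p) = p"
proof -
  have gp: "g p = S (k - 1) + S k + 1 - p" unfolding g_def blkof_eq[OF assms] ..
  show 1: "g p \<in> Rb k" using assms(2) unfolding gp Rb_std[OF assms(1)] by auto
  have "g (g p) = S (k - 1) + S k + 1 - g p" unfolding g_def[of "g p"] blkof_eq[OF assms(1) 1] ..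
  then show "g (g p) = p" using gp by simp
qed

lemma g_order: assumes "k \<in> {1..int n}" "p \<in> Rb k" "q \<in> Rb k" "p < q" shows "g q < g p"
  unfolding g_def blkof_eq[OF assms(1,2)] blkof_eq[OF assms(1,3)] using assms(4) by simp

definition w0 :: "int \<Rightarrow> int" where
  "w0 x = ((x - 1) div int r) * int r + g ((x - 1) mod int r + 1)"

lemma w0_base: "x \<in> {1..int r} \<Longrightarrow> w0 x = g x"
  unfolding w0_def by simp

lemma g_range: assumes "p \<in> {1..int r}" shows "g p \<in> {1..int r}" "g (g p) = p"
  using Rb_cover[OF assms] g_blk Rb_sub by blast+

lemma w0_per: "\<forall>i. w0 (i + int r) = w0 i + int r"
proof
  fix i
  have e: "i + int r - 1 = (i - 1) + int r" by simp
  have "int r \<noteq> 0" using r1 by simp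
  then have "(i + int r - 1) div int r = (i - 1) div int r + 1" unfolding e by (simp add: div_add_self2)
  moreover have "(i + int r - 1) mod int r = (i - 1) mod int r" unfolding e by simp
  ultimately show "w0 (i + int r) = w0 i + int r" unfolding w0_def by (simp add: algebra_simps)
qed

lemma w0_inv: "w0 (w0 x) = x"
proof -
  let ?c = "(x - 1) div int r" and ?p = "(x - 1) mod int r + 1"
  have "0 < int r" using r1 by simp
  then have "(x - 1) mod int r < int r" "0 \<le> (x - 1) mod int r" by simp_all
  then have p: "?p \<in> {1..int r}" by simp
  have "w0 x = g ?p + ?c * int r" unfolding w0_def by simp
  then have "w0 (w0 x) = w0 (g ?p) + ?c * int r" using per_int[OF w0_per] by simp
  also have "\<dots> = ?p + ?c * int r" using w0_base g_range[OF p] by simp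
  also have "\<dots> = x" by (metis add.commute diff_add_cancel div_mult_mod_eq add.assoc)
  finally show ?thesis .
qed

lemma w0_young: "w0 \<in> young_sub lam n r"
proof -
  have "bij w0" by (rule involuntory_imp_bij) (rule w0_inv)
  moreover have "\<forall>k\<in>{1..int n}. w0 ` Rb k = Rb k"
  proof
    fix k assume k: "k \<in> {1..int n}"
    have sub: "w0 ` Rb k \<subseteq> Rb k"
    proof
      fix y assume "y \<in> w0 ` Rb k"
      then obtain x where x: "x \<in> Rb k" "y = w0 x" by blast
      then have "x \<in> {1..int r}" using Rb_sub k by blast
      then show "y \<in> Rb k" using x w0_base g_blk k by simp
    qed
    moreover have "Rb k \<subseteq> w0 ` Rb k"
    proof
      fix x assume "x \<in> Rb k"
      then have "w0 x \<in> Rb k" using sub by blast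
      then show "x \<in> w0 ` Rb k" using w0_inv by (metis image_eqI)
    qed
    ultimately show "w0 ` Rb k = Rb k" by blast
  qed
  ultimately show ?thesis unfolding young_sub_def aff_sym_def using w0_per by blast
qed

lemma Inv_w0: "Inv r w0 = Zs"
proof
  show "Inv r w0 \<subseteq> Zs" by (rule Inv_young_Zs[OF w0_young])
next
  show "Zs \<subseteq> Inv r w0"
  proof
    fix x assume "x \<in> Zs"
    then obtain s t k where x: "x = (s,t)" "s < t" "k \<in> {1..int n}" "s \<in> Rb k" "t \<in> Rb k"
      unfolding Zs_def by blast
    have st: "s \<in> {1..int r}" "t \<in> {1..int r}" using Rb_sub x by blast+
    have "w0 t < w0 s" using g_order[OF x(3,4,5,2)] w0_base st by simp
    then show "x \<in> Inv r w0" unfolding Inv_def using x st by auto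
  qed
qed

end


context blk begin

lemma sref_range: assumes p: "1 \<le> p" "p + 1 \<le> int r" and y: "y \<in> {1..int r}"
  shows "sref r (nat p) y = (if y = p + 1 then p else if y = p then p + 1 else y)"
proof -
  have ip: "int (nat p) = p" using p by simp
  have a: "y mod int r = (p + 1) mod int r \<longleftrightarrow> y = p + 1"
    using range_modeq[OF y, of "p+1"] p by auto
  have b: "y mod int r = p mod int r \<longleftrightarrow> y = p"
    using range_modeq[OF y, of "p"] p by auto
  show ?thesis unfolding sref_def ip a b by auto
qed

lemma young_inj: "w \<in> young_sub lam n r \<Longrightarrow> inj w"
  unfolding young_sub_def aff_sym_def using bij_is_inj by blast

lemma inj_ne: "inj w \<Longrightarrow> x \<noteq> y \<Longrightarrow> w x \<noteq> w y"
  by (meson injD)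

lemma young_mono: assumes w: "w \<in> young_sub lam n r"
  and nd: "\<forall>p. 1 \<le> p \<and> p + 1 \<le> int r \<longrightarrow> \<not> w (p + 1) < w p"
  shows "1 \<le> p \<Longrightarrow> p + 1 + int m \<le> int r \<Longrightarrow> w p < w (p + 1 + int m)"
proof (induction m)
  case 0
  then have "\<not> w (p + 1) < w p" using nd by simp
  moreover have "w p \<noteq> w (p + 1)" using inj_ne[OF young_inj[OF w], of p "p+1"] by simp
  ultimately show ?case by simp
next
  case (Suc m)
  then have A: "w p < w (p + 1 + int m)" by simp
  have h1: "1 \<le> p + 1 + int m" "p + 1 + int m + 1 \<le> int r" using Suc.prems by simp_all
  have "\<not> w (p + 1 + int m + 1) < w (p + 1 + int m)" using nd h1 by blast
  moreover have "w (p + 1 + int m) \<noteq> w (p + 1 + int m + 1)"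
    using inj_ne[OF young_inj[OF w], of "p + 1 + int m" "p + 1 + int m + 1"] by simp
  ultimately have "w (p + 1 + int m) < w (p + 1 + int m + 1)" by simp
  then show ?case using A by (simp add: algebra_simps)
qed

lemma young_id: assumes w: "w \<in> young_sub lam n r"
  and nd: "\<forall>p. 1 \<le> p \<and> p + 1 \<le> int r \<longrightarrow> \<not> w (p + 1) < w p"
  shows "w = id"
proof -
  have lt: "w p < w q" if "1 \<le> p" "p < q" "q \<le> int r" for p q
  proof -
    have "w p < w (p + 1 + int (nat (q - p - 1)))" by (rule young_mono[OF w nd]) (use that in simp_all)
    then show ?thesis using that by simp
  qed
  have ge: "1 + int m \<le> w (1 + int m)" if "1 + int m \<le> int r" for m
    using that
  proof (induction m)
    case 0 then show ?case using young_range[OF w, of 1] by simp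
  next
    case (Suc m)
    then have "1 + int m \<le> w (1 + int m)" by simp
    moreover have "w (1 + int m) < w (1 + int (Suc m))" by (rule lt) (use Suc.prems in simp_all)
    ultimately show ?case by simp
  qed
  have le: "w (int r - int m) \<le> int r - int m" if "1 \<le> int r - int m" for m
    using that
  proof (induction m)
    case 0 then show ?case using young_range[OF w, of "int r"] r1 by simp
  next
    case (Suc m)
    then have "w (int r - int m) \<le> int r - int m" by simp
    moreover have "w (int r - int (Suc m)) < w (int r - int m)" by (rule lt) (use Suc.prems in simp_all)
    ultimately show ?case by simp
  qed
  have base: "w y = y" if "y \<in> {1..int r}" for y
  proof -
    have "1 + int (nat (y - 1)) \<le> w (1 + int (nat (y - 1)))" using ge[of "nat (y-1)"] that by simp
    moreover have "w (int r - int (nat (int r - y))) \<le> int r - int (nat (int r - y))"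
      using le[of "nat (int r - y)"] that by simp
    ultimately show ?thesis using that by simp
  qed
  have per: "\<forall>i. w (i + int r) = w i + int r" using w unfolding young_sub_def aff_sym_def by auto
  show ?thesis
  proof
    fix x
    let ?c = "(x - 1) div int r" and ?p = "(x - 1) mod int r + 1"
    have "0 < int r" using r1 by simp
    then have "(x - 1) mod int r < int r" "0 \<le> (x - 1) mod int r" by simp_all
    then have p: "?p \<in> {1..int r}" by simp
    have x: "x = ?p + ?c * int r" by (metis add.commute diff_add_cancel div_mult_mod_eq add.assoc)
    have "w x = w ?p + ?c * int r" by (subst x, rule per_int[OF per])
    then show "w x = id x" using base[OF p] x by simp
  qed
qed

lemma bubble: "w \<in> young_sub lam n r \<Longrightarrow> \<exists>is. length is \<le> card (Inv r w) \<and> set is \<subseteq> {1..r} \<and>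
      w = rho_pow 0 \<circ> foldr (\<circ>) (map (sref r) is) id"
proof (induction "card (Inv r w)" arbitrary: w rule: less_induct)
  case less
  show ?case
  proof (cases "\<exists>p. 1 \<le> p \<and> p + 1 \<le> int r \<and> w (p + 1) < w p")
    case False
    then have "w = id" using young_id[OF less.prems] by blast
    then show ?thesis by (intro exI[of _ "[]"]) (simp add: rho0)
  next
    case True
    then obtain p where p: "1 \<le> p" "p + 1 \<le> int r" "w (p+1) < w p" by blast
    define \<sigma> where "\<sigma> = sref r (nat p)"
    have r2: "r \<ge> 2" using p by simp
    have ss: "\<sigma> (\<sigma> y) = y" for y unfolding \<sigma>_def by (rule sref_inv[OF r2])
    have sr: "\<sigma> y = (if y = p + 1 then p else if y = p then p + 1 else y)" if "y \<in> {1..int r}" for y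
      unfolding \<sigma>_def by (rule sref_range[OF p(1,2) that])
    have srange: "\<sigma> y \<in> {1..int r}" if "y \<in> {1..int r}" for y
      using sr[OF that] that p by auto
    have sord: "\<sigma> a < \<sigma> b" if "a \<in> {1..int r}" "b \<in> {1..int r}" "a < b" "(a,b) \<noteq> (p,p+1)" for a b
      unfolding sr[OF that(1)] sr[OF that(2)] using that by auto
    have inv_pp: "(p, p+1) \<in> Inv r w" using p unfolding Inv_def by auto
    obtain k0 where k0: "k0 \<in> {1..int n}" "p \<in> Rb k0" "p+1 \<in> Rb k0"
      using Inv_young[OF less.prems inv_pp] by blast
    define w' where "w' = w \<circ> \<sigma>"
    have sper: "\<forall>i. \<sigma> (i + int r) = \<sigma> i + int r" unfolding \<sigma>_def using sref_per by simp
    have sblk: "\<sigma> ` Rb k = Rb k" if k: "k \<in> {1..int n}" for k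
    proof -
      have sub: "\<sigma> y \<in> Rb k" if y: "y \<in> Rb k" for y
      proof -
        have yr: "y \<in> {1..int r}" using Rb_sub k y by blast
        show ?thesis
        proof (cases "y = p \<or> y = p + 1")
          case True
          then have "k = k0" using Rb_uniq[OF k k0(1)] y k0 by blast
          then show ?thesis using True sr[OF yr] k0 by auto
        next
          case False then show ?thesis using sr[OF yr] y by auto
        qed
      qed
      show ?thesis
      proof
        show "\<sigma> ` Rb k \<subseteq> Rb k" using sub by blast
        show "Rb k \<subseteq> \<sigma> ` Rb k"
        proof
          fix y assume "y \<in> Rb k"
          then have "\<sigma> y \<in> Rb k" by (rule sub)
          then show "y \<in> \<sigma> ` Rb k" using ss[of y] by (metis image_eqI)
        qed
      qed
    qed
    have wprops: "bij w" "\<forall>i. w (i + int r) = w i + int r" "\<forall>k\<in>{1..int n}. w ` Rb k = Rb k"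
      using less.prems unfolding young_sub_def aff_sym_def by auto
    have bs: "bij \<sigma>" by (rule involuntory_imp_bij) (rule ss)
    have w'y: "w' \<in> young_sub lam n r"
    proof -
      have "bij w'" unfolding w'_def using wprops(1) bs by (rule bij_comp[rotated])
      moreover have "\<forall>i. w' (i + int r) = w' i + int r" unfolding w'_def using wprops(2) sper by simp
      moreover have "\<forall>k\<in>{1..int n}. w' ` Rb k = Rb k"
        unfolding w'_def image_comp[symmetric] using sblk wprops(3) by simp
      ultimately show ?thesis unfolding young_sub_def aff_sym_def by blast
    qed
    define f where "f = (\<lambda>(a::int,b::int). (\<sigma> a, \<sigma> b))"
    have eqI: "Inv r w' = f ` (Inv r w - {(p,p+1)})"
    proof
      show "Inv r w' \<subseteq> f ` (Inv r w - {(p,p+1)})"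
      proof
        fix x assume x: "x \<in> Inv r w'"
        then obtain a b where ab: "x = (a,b)" "1 \<le> a" "a < b" "b \<le> int r" "w (\<sigma> b) < w (\<sigma> a)"
          unfolding Inv_def w'_def by auto
        have ar: "a \<in> {1..int r}" and br: "b \<in> {1..int r}" using ab by auto
        have ne: "(a,b) \<noteq> (p,p+1)"
        proof
          assume "(a,b) = (p,p+1)"
          then have "\<sigma> a = p + 1" "\<sigma> b = p" using sr[OF ar] sr[OF br] by auto
          then show False using ab(5) p(3) by simp
        qed
        have lt: "\<sigma> a < \<sigma> b" by (rule sord[OF ar br ab(3) ne])
        have ne2: "(\<sigma> a, \<sigma> b) \<noteq> (p, p+1)"
        proof
          assume "(\<sigma> a, \<sigma> b) = (p, p+1)"
          then have "a = \<sigma> p" "b = \<sigma> (p+1)" using ss by (metis prod.inject)+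
          then have "a = p + 1" "b = p" using sr p by auto
          then show False using ab(3) by simp
        qed
        have "(\<sigma> a, \<sigma> b) \<in> Inv r w" unfolding Inv_def using srange[OF ar] srange[OF br] lt ab(5) by auto
        moreover have "f (\<sigma> a, \<sigma> b) = x" unfolding f_def using ss ab(1) by simp
        ultimately show "x \<in> f ` (Inv r w - {(p,p+1)})" using ne2 by force
      qed
    next
      show "f ` (Inv r w - {(p,p+1)}) \<subseteq> Inv r w'"
      proof
        fix x assume "x \<in> f ` (Inv r w - {(p,p+1)})"
        then obtain c d where cd: "x = f (c,d)" "(c,d) \<in> Inv r w" "(c,d) \<noteq> (p,p+1)" by auto
        have c: "1 \<le> c" "c < d" "d \<le> int r" "w d < w c" using cd(2) unfolding Inv_def by auto
        have cr: "c \<in> {1..int r}" and dr: "d \<in> {1..int r}" using c by auto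
        have "\<sigma> c < \<sigma> d" by (rule sord[OF cr dr c(2) cd(3)])
        moreover have "w' (\<sigma> d) < w' (\<sigma> c)" unfolding w'_def using ss c(4) by simp
        ultimately show "x \<in> Inv r w'" unfolding Inv_def cd(1) f_def
          using srange[OF cr] srange[OF dr] by auto
      qed
    qed
    have injf: "inj_on f X" for X unfolding f_def inj_on_def using ss by (metis prod.inject case_prod_conv surj_pair)
    have "card (Inv r w') = card (Inv r w - {(p,p+1)})" unfolding eqI by (rule card_image[OF injf])
    also have "\<dots> = card (Inv r w) - 1" using inv_pp Inv_fin by simp
    finally have cw: "card (Inv r w') < card (Inv r w)"
      using inv_pp Inv_fin by (metis card_gt_0_iff diff_less empty_iff zero_less_one)
    obtain is' where is': "length is' \<le> card (Inv r w')" "set is' \<subseteq> {1..r}"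
        "w' = rho_pow 0 \<circ> foldr (\<circ>) (map (sref r) is') id"
      using less.hyps[OF cw w'y] by blast
    have "w = w' \<circ> \<sigma>" unfolding w'_def using ss by (simp add: fun_eq_iff)
    also have "\<dots> = rho_pow 0 \<circ> foldr (\<circ>) (map (sref r) (is' @ [nat p])) id"
      unfolding is'(3) foldr_snoc \<sigma>_def by (simp add: comp_assoc)
    finally have weq: "w = rho_pow 0 \<circ> foldr (\<circ>) (map (sref r) (is' @ [nat p])) id" .
    have "nat p \<in> {1..r}" using p by auto
    then show ?thesis using weq is' cw by (intro exI[of _ "is' @ [nat p]"]) auto
  qed
qed

end


context blk begin

lemma Zs_Sigma: "Zs = Sigma {1..int r} T"
proof
  show "Zs \<subseteq> Sigma {1..int r} T" unfolding Zs_def T_def by auto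
  show "Sigma {1..int r} T \<subseteq> Zs"
  proof
    fix x assume "x \<in> Sigma {1..int r} T"
    then obtain s t k where x: "x = (s,t)" "s \<in> {1..int r}" "s < t" "s \<in> Rb k" "t \<in> Rb k"
      unfolding T_def by blast
    have "k \<in> {1..int n}" by (rule Rb_base[OF x(2,4)])
    then show "x \<in> Zs" unfolding Zs_def using x by auto
  qed
qed

lemma card_Zs_len: "card Zs = aff_len r (longest_young lam n r)"
proof -
  have upper: "aff_len r v \<le> card Zs" if v: "v \<in> young_sub lam n r" for v
  proof -
    obtain "is" where hw: "length is \<le> card (Inv r v)" "set is \<subseteq> {1..r}"
      "v = rho_pow 0 \<circ> foldr (\<circ>) (map (sref r) is) id" using bubble[OF v] by blast
    have "aff_len r v \<le> length is" by (rule aff_len_upper[OF refl hw(2,3)])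
    also have "\<dots> \<le> card (Inv r v)" by (rule hw(1))
    also have "\<dots> \<le> card Zs" by (rule card_mono[OF Zs_fin Inv_young_Zs[OF v]])
    finally show ?thesis .
  qed
  have lw0: "card Zs \<le> aff_len r w0"
  proof -
    obtain "is" where hw: "length is \<le> card (Inv r w0)" "set is \<subseteq> {1..r}"
      "w0 = rho_pow 0 \<circ> foldr (\<circ>) (map (sref r) is) id" using bubble[OF w0_young] by blast
    have "card (Inv r w0) \<le> aff_len r w0" by (rule aff_len_lower[OF r1]) (use hw in blast)
    then show ?thesis using Inv_w0 by simp
  qed
  let ?P = "\<lambda>w. w \<in> young_sub lam n r \<and> (\<forall>v \<in> young_sub lam n r. aff_len r v \<le> aff_len r w)"
  have "?P w0" using w0_young upper lw0 by (meson order_trans)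
  then have "?P (longest_young lam n r)" unfolding longest_young_def by (rule someI[of ?P w0])
  then show ?thesis using upper lw0 w0_young by (meson antisym order_trans)
qed

lemma card_Y: assumes d: "d \<in> aff_sym r"
  shows "finite (Sigma (d ` {1..int r}) T) \<and> card (Sigma (d ` {1..int r}) T) = card (Sigma {1..int r} T)"
proof -
  have bd: "bij d" and per: "\<forall>i. d (i + int r) = d i + int r" using d unfolding aff_sym_def by auto
  have injd: "inj d" using bd bij_is_inj by blast
  have fin: "finite (Sigma (d ` {1..int r}) T)" by (rule finite_SigmaI) (auto simp: T_fin)
  define h where "h p = (d p - 1) mod int r + 1" for p
  have r0: "0 < int r" using r1 by simp
  have hr: "h p \<in> {1..int r}" for p
  proof -
    have "(d p - 1) mod int r < int r" "0 \<le> (d p - 1) mod int r" using r0 by simp_all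
    then show ?thesis unfolding h_def by simp
  qed
  have dec: "d p = h p + ((d p - 1) div int r) * int r" for p
    using div_mult_mod_eq[of "d p - 1" "int r"] unfolding h_def by linarith
  have cT: "card (T (d p)) = card (T (h p))" for p
    by (subst dec) (rule card_T_int)
  have hmod: "h p mod int r = d p mod int r" for p
    using arg_cong[OF dec[of p], of "\<lambda>x. x mod int r"] by simp
  have injh: "inj_on h {1..int r}"
  proof
    fix p q assume "p \<in> {1..int r}" "q \<in> {1..int r}" "h p = h q"
    then have "d p mod int r = d q mod int r" using hmod by metis
    then show "p = q" using modr_inj[OF per injd, of p q] \<open>p \<in> {1..int r}\<close> \<open>q \<in> {1..int r}\<close> by blast
  qed
  have himg: "h ` {1..int r} = {1..int r}"
    by (rule endo_inj_surj) (use hr injh in auto)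
  have "card (Sigma (d ` {1..int r}) T) = (\<Sum>s\<in>d ` {1..int r}. card (T s))"
    by (rule card_SigmaI) (auto simp: T_fin)
  also have "\<dots> = (\<Sum>p\<in>{1..int r}. card (T (d p)))"
    by (rule sum.reindex[unfolded comp_def]) (use injd in \<open>auto simp: inj_on_def dest: injD\<close>)
  also have "\<dots> = (\<Sum>p\<in>{1..int r}. card (T (h p)))" using cT by simp
  also have "\<dots> = (\<Sum>s\<in>h ` {1..int r}. card (T s))"
    by (rule sum.reindex[unfolded comp_def, symmetric]) (rule injh)
  also have "\<dots> = card (Sigma {1..int r} T)" unfolding himg
    by (rule card_SigmaI[symmetric]) (auto simp: T_fin)
  finally show ?thesis using fin by simp
qed

end

theorem lemma3p10p1:
  fixes n r :: nat and lam :: "int \<Rightarrow> nat" and d :: "int \<Rightarrow> int"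
  assumes "n \<ge> 1" and "r \<ge> 1"
    and "lam \<in> Lam_aff n r"
    and "d \<in> dist_reps lam n r"
  defines "Y \<equiv> {(s, t). 1 \<le> inv d s \<and> inv d s \<le> int r \<and> s < t \<and>
                   (\<exists>k. s \<in> Rblock lam n r k \<and> t \<in> Rblock lam n r k)}"
    and "Z \<equiv> {(s, t). 1 \<le> s \<and> s \<le> int r \<and> s < t \<and>
                   (\<exists>k\<in>{1..int n}. s \<in> Rblock lam n r k \<and> t \<in> Rblock lam n r k)}"
  shows "finite Y \<and> finite Z \<and> card Y = card Z \<and>
         card Z = aff_len r (longest_young lam n r)"
proof -
  interpret blk n r lam using assms(1-3) by unfold_locales
  have d: "d \<in> aff_sym r" using assms(4) unfolding dist_reps_def by blast
  have bd: "bij d" using d unfolding aff_sym_def by blast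
  have ZZ: "Z = Zs" unfolding Z_def Zs_def ..
  have memd: "(1 \<le> inv d s \<and> inv d s \<le> int r) \<longleftrightarrow> s \<in> d ` {1..int r}" for s
  proof
    assume "1 \<le> inv d s \<and> inv d s \<le> int r"
    moreover have "d (inv d s) = s" using bd by (meson bij_inv_eq_iff)
    ultimately show "s \<in> d ` {1..int r}" by (metis atLeastAtMost_iff image_eqI)
  next
    assume "s \<in> d ` {1..int r}"
    then obtain p where "p \<in> {1..int r}" "s = d p" by blast
    moreover have "inv d (d p) = p" using bd bij_is_inj inv_f_f by metis
    ultimately show "1 \<le> inv d s \<and> inv d s \<le> int r" by simp
  qed
  have YY: "Y = Sigma (d ` {1..int r}) T" unfolding Y_def T_def using memd by auto
  show ?thesis using card_Y[OF d] Zs_Sigma Zs_fin card_Zs_len unfolding YY ZZ by simp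
qed


end
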